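(* Fix $(\sigma,i)$ with $1\le\sigma\le l$ and $1\le i\le d_\sigma$, and let $b_i^{(\sigma)}\colon C_i^{(\sigma)}\to\mathbb{A}^d$ be the chart described below. Then there exists a $k$-derivation $\psi$ of $\Gamma(C_i^{(\sigma)},\mathcal{O})=k[u_j^{(\pi)}]$ such that $b_i^{(\sigma),*}\partial_\mathbf{d}=u_i^{(\sigma)}\cdot\psi$ (as rational vector fields) and the coefficients of $\psi$ in the basis $\{\partial/\partial u_j^{(\pi)}\}$ generate the unit ideal. In particular the pullback $1$-foliation $b_i^{(\sigma),*}\mathscr{F}$, which is generated by $\psi$, is regular.
   Context: $k$ algebraically closed of characteristic $p>0$; $\mathbf{d}=(d_1,\dots,d_l)$ with $0\le d_\lambda\le p-1$; $\mathbb{A}^d$ has coordinates $x_j^{(\pi)}$ ($1\le\pi\le l$, $0\le j\le d_\pi$); $\partial_\mathbf{d}=\sum_\pi\sum_{j=1}^{d_\pi}x_j^{(\pi)}\partial/\partial x_{j-1}^{(\pi)}$ and $\mathscr{F}=\mathcal{O}_{\mathbb{A}^d}\cdot\partial_\mathbf{d}$. The chart $C_i^{(\sigma)}=\operatorname{Spec}k[u_j^{(\pi)}\mid 1\le\pi\le l,\ 0\le j\le d_\pi]$ (an affine chart of the weighted blow-up of $\mathbb{A}^d$ giving $x_j^{(\pi)}$ weight $j$) maps to $\mathbb{A}^d$ via: $x_0^{(\pi)}=u_0^{(\pi)}$ for all $\pi$; $x_i^{(\sigma)}=(u_i^{(\sigma)})^i$; $x_j^{(\pi)}=(u_i^{(\sigma)})^j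 u_j^{(\pi)}$ for all $(\pi,j)$ with $j\ge1$ and $(\pi,j)\ne(\sigma,i)$. The pullback $1$-foliation on $C_i^{(\sigma)}$ is the saturation of the subsheaf of the tangent sheaf generated by $b_i^{(\sigma),*}\partial_\mathbf{d}$ (which is birational). *)

theory Defs
  imports "HOL-Computational_Algebra.Polynomial" "HOL-Library.Poly_Mapping"
begin

text \<open>Polynomials over 'k in variables indexed by pairs (pp, j), encoded as
  finitely supported maps from monomials (exponent vectors) to coefficients.\<close>

type_synonym 'k mpoly = "((nat \<times> nat) \<Rightarrow>\<^sub>0 nat) \<Rightarrow>\<^sub>0 'k"

definition var :: "nat \<Rightarrow> nat \<Rightarrow> 'k::comm_ring_1 mpoly" where
  "var pp j = Poly_Mapping.single (Poly_Mapping.single (pp, j) 1) 1"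

definition const :: "'k::comm_ring_1 \<Rightarrow> 'k mpoly" where
  "const c = Poly_Mapping.single 0 c"

definition idx :: "nat \<Rightarrow> (nat \<Rightarrow> nat) \<Rightarrow> (nat \<times> nat) set" where
  "idx l d = {(pp, j). 1 \<le> pp \<and> pp \<le> l \<and> j \<le> d pp}"

definition polyring :: "nat \<Rightarrow> (nat \<Rightarrow> nat) \<Rightarrow> 'k::comm_ring_1 mpoly set" where
  "polyring l d = {f. \<forall>m \<in> Poly_Mapping.keys f. Poly_Mapping.keys m \<subseteq> idx l d}"

definition is_k_derivation :: "nat \<Rightarrow> (nat \<Rightarrow> nat) \<Rightarrow> ('k::comm_ring_1 mpoly \<Rightarrow> 'k mpoly) \<Rightarrow> bool" where
  "is_k_derivation l d D \<longleftrightarrow>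
     (\<forall>f \<in> polyring l d. D f \<in> polyring l d) \<and>
     (\<forall>f \<in> polyring l d. \<forall>g \<in> polyring l d. D (f + g) = D f + D g) \<and>
     (\<forall>f \<in> polyring l d. \<forall>g \<in> polyring l d. D (f * g) = f * D g + g * D f) \<and>
     (\<forall>c. D (const c) = 0)"

text \<open>The pullback under the chart b_i^(sigma) of the coordinate x_j^(pp).\<close>
definition chart_pullback :: "nat \<Rightarrow> nat \<Rightarrow> nat \<Rightarrow> nat \<Rightarrow> 'k::comm_ring_1 mpoly" where
  "chart_pullback sigma i pp j =
     (if j = 0 then var pp 0
      else if (pp, j) = (sigma, i) then (var sigma i) ^ i
      else (var sigma i) ^ j * var pp j)"

text \<open>The vector field partial_d applied to x_j^(pp): x_{j+1}^(pp) if j < d pp, else 0;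
  expressed through its pullback.\<close>
definition pullback_of_partial :: "(nat \<Rightarrow> nat) \<Rightarrow> nat \<Rightarrow> nat \<Rightarrow> nat \<Rightarrow> nat \<Rightarrow> 'k::comm_ring_1 mpoly" where
  "pullback_of_partial d sigma i pp j =
     (if j < d pp then chart_pullback sigma i pp (Suc j) else 0)"

end

theory Submission
  imports Defs
begin

definition pd :: "nat \<times> nat \<Rightarrow> 'k::comm_ring_1 mpoly \<Rightarrow> 'k mpoly" where
  "pd v f = (\<Sum>m\<in>Poly_Mapping.keys f. Poly_Mapping.single (m - Poly_Mapping.single v 1)
      (Poly_Mapping.lookup f m * of_nat (Poly_Mapping.lookup m v)))"

lemma pd_superset:
  assumes "finite S" "Poly_Mapping.keys f \<subseteq> S"
  shows "pd v f = (\<Sum>m\<in>S. Poly_Mapping.single (m - Poly_Mapping.single v 1)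
      (Poly_Mapping.lookup f m * of_nat (Poly_Mapping.lookup m v)))"
  unfolding pd_def using assms
  by (intro sum.mono_neutral_left) (auto simp: in_keys_iff)

lemma pd_add: "pd v (f + g) = pd v f + pd v g"
proof -
  let ?S = "Poly_Mapping.keys f \<union> Poly_Mapping.keys g"
  have "finite ?S" by simp
  have k: "Poly_Mapping.keys (f+g) \<subseteq> ?S" by (rule keys_add)
  show ?thesis
    using pd_superset[OF \<open>finite ?S\<close> k, of v] pd_superset[OF \<open>finite ?S\<close>, of f v]
      pd_superset[OF \<open>finite ?S\<close>, of g v]
    by (simp add: lookup_add distrib_right single_add sum.distrib)
qed

lemma pd_zero [simp]: "pd v 0 = 0"
  by (simp add: pd_def)

lemma pd_sum: "pd v (sum F A) = (\<Sum>x\<in>A. pd v (F x))"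
  by (induction A rule: infinite_finite_induct) (auto simp: pd_add)

lemma pd_single: "pd v (Poly_Mapping.single m c) =
   Poly_Mapping.single (m - Poly_Mapping.single v 1) (c * of_nat (Poly_Mapping.lookup m v))"
  by (cases "c = 0") (simp_all add: pd_def)

lemma poly_expand: "f = (\<Sum>m\<in>Poly_Mapping.keys f. Poly_Mapping.single m (Poly_Mapping.lookup f m))"
proof (rule poly_mapping_eqI)
  fix k
  have "(\<Sum>m\<in>Poly_Mapping.keys f. Poly_Mapping.lookup (Poly_Mapping.single m (Poly_Mapping.lookup f m)) k)
      = (\<Sum>m\<in>Poly_Mapping.keys f. if m = k then Poly_Mapping.lookup f m else 0)"
    by (intro sum.cong) (auto simp: lookup_single)
  also have "\<dots> = Poly_Mapping.lookup f k"
    by (simp add: sum.delta in_keys_iff)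
  finally show "Poly_Mapping.lookup f k = Poly_Mapping.lookup (\<Sum>m\<in>Poly_Mapping.keys f. Poly_Mapping.single m (Poly_Mapping.lookup f m)) k"
    by (simp add: lookup_sum)
qed

lemma key_eq:
  assumes "0 < Poly_Mapping.lookup n v"
  shows "m + n - Poly_Mapping.single v (1::nat) = m + (n - Poly_Mapping.single v 1)"
  using assms
  by (intro poly_mapping_eqI) (auto simp: lookup_add lookup_minus lookup_single when_def)

lemma pd_mono_leibniz:
  "pd v (Poly_Mapping.single m a * Poly_Mapping.single n b) =
     Poly_Mapping.single m a * pd v (Poly_Mapping.single n b) + Poly_Mapping.single n b * pd v (Poly_Mapping.single m a)"
proof -
  let ?d = "Poly_Mapping.single v (1::nat)"
  have L: "pd v (Poly_Mapping.single m a * Poly_Mapping.single n b)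
     = Poly_Mapping.single (m + n - ?d) (a * b * (of_nat (Poly_Mapping.lookup m v) + of_nat (Poly_Mapping.lookup n v)))"
    by (simp add: mult_single pd_single lookup_add)
  have R: "Poly_Mapping.single m a * pd v (Poly_Mapping.single n b) + Poly_Mapping.single n b * pd v (Poly_Mapping.single m a)
     = Poly_Mapping.single (m + (n - ?d)) (a * (b * of_nat (Poly_Mapping.lookup n v)))
       + Poly_Mapping.single (n + (m - ?d)) (b * (a * of_nat (Poly_Mapping.lookup m v)))"
    by (simp add: mult_single pd_single)
  have e1: "Poly_Mapping.lookup n v > 0 \<Longrightarrow> m + (n - ?d) = m + n - ?d" using key_eq by metis
  have e2: "Poly_Mapping.lookup m v > 0 \<Longrightarrow> n + (m - ?d) = m + n - ?d" using key_eq[of m v n]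
    by (simp add: add.commute)
  have C1: "?thesis" if h: "Poly_Mapping.lookup n v > 0" "Poly_Mapping.lookup m v > 0"
    unfolding L R e1[OF h(1)] e2[OF h(2)] single_add[symmetric]
    by (simp add: algebra_simps)
  have C2: "?thesis" if h: "Poly_Mapping.lookup n v > 0" "\<not> Poly_Mapping.lookup m v > 0"
    unfolding L R e1[OF h(1)] using h by (simp add: algebra_simps)
  have C3: "?thesis" if h: "\<not> Poly_Mapping.lookup n v > 0" "Poly_Mapping.lookup m v > 0"
    unfolding L R e2[OF h(2)] using h by (simp add: algebra_simps)
  have C4: "?thesis" if h: "\<not> Poly_Mapping.lookup n v > 0" "\<not> Poly_Mapping.lookup m v > 0"
    unfolding L R using h by simp
  show ?thesis using C1 C2 C3 C4 by blast
qed

lemma pd_mult: "pd v (f * g) = f * pd v g + g * pd v f"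
proof -
  let ?s = "\<lambda>h m. Poly_Mapping.single m (Poly_Mapping.lookup h m)"
  have "f * g = (\<Sum>m\<in>Poly_Mapping.keys f. ?s f m) * (\<Sum>n\<in>Poly_Mapping.keys g. ?s g n)"
    using poly_expand[of f] poly_expand[of g] by simp
  also have "\<dots> = (\<Sum>m\<in>Poly_Mapping.keys f. \<Sum>n\<in>Poly_Mapping.keys g. ?s f m * ?s g n)"
    by (rule sum_product)
  finally have fg: "f * g = \<dots>" .
  have "pd v (f * g) = (\<Sum>m\<in>Poly_Mapping.keys f. \<Sum>n\<in>Poly_Mapping.keys g.
          ?s f m * pd v (?s g n) + ?s g n * pd v (?s f m))"
    unfolding fg by (simp add: pd_sum pd_mono_leibniz)
  also have "\<dots> = (\<Sum>m\<in>Poly_Mapping.keys f. ?s f m) * (\<Sum>n\<in>Poly_Mapping.keys g. pd v (?s g n))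
      + (\<Sum>n\<in>Poly_Mapping.keys g. ?s g n) * (\<Sum>m\<in>Poly_Mapping.keys f. pd v (?s f m))"
    by (simp add: sum.distrib sum_distrib_left sum_distrib_right mult.commute sum.swap[of _ "Poly_Mapping.keys f"])
  also have "\<dots> = f * pd v g + g * pd v f"
    by (simp flip: pd_sum poly_expand)
  finally show ?thesis .
qed


lemma idx_finite: "finite (idx l d)"
proof -
  have "idx l d \<subseteq> {1..l} \<times> {0..Max (d ` {1..l})}"
    by (auto simp: idx_def intro!: le_trans[OF _ Max_ge])
  then show ?thesis by (rule finite_subset) simp
qed

lemma P_iff: "f \<in> polyring l d \<longleftrightarrow> (\<forall>m\<in>Poly_Mapping.keys f. Poly_Mapping.keys m \<subseteq> idx l d)"
  by (simp add: polyring_def)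

lemma P_zero [simp]: "0 \<in> polyring l d"
  by (simp add: P_iff)

lemma P_add: "f \<in> polyring l d \<Longrightarrow> g \<in> polyring l d \<Longrightarrow> f + g \<in> polyring l d"
  unfolding P_iff using keys_add[of f g] by blast

lemma P_uminus: "f \<in> polyring l d \<Longrightarrow> - f \<in> polyring l d"
  unfolding P_iff by simp

lemma P_diff: "f \<in> polyring l d \<Longrightarrow> g \<in> polyring l d \<Longrightarrow> f - g \<in> polyring l d"
  unfolding P_iff using keys_diff[of f g] by blast

lemma P_mult: "f \<in> polyring l d \<Longrightarrow> g \<in> polyring l d \<Longrightarrow> f * g \<in> polyring l d"
  unfolding P_iff
proof
  fix m assume f: "\<forall>m\<in>Poly_Mapping.keys f. Poly_Mapping.keys m \<subseteq> idx l d"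
    and g: "\<forall>m\<in>Poly_Mapping.keys g. Poly_Mapping.keys m \<subseteq> idx l d"
    and m: "m \<in> Poly_Mapping.keys (f * g)"
  then obtain a b where "m = a + b" "a \<in> Poly_Mapping.keys f" "b \<in> Poly_Mapping.keys g"
    using keys_mult[of f g] by blast
  then show "Poly_Mapping.keys m \<subseteq> idx l d"
    using f g keys_add[of a b] by blast
qed

lemma P_single: "Poly_Mapping.keys m \<subseteq> idx l d \<Longrightarrow> Poly_Mapping.single m c \<in> polyring l d"
  unfolding P_iff by simp

lemma P_const [simp]: "const c \<in> polyring l d"
  unfolding const_def by (rule P_single) simp

lemma P_one [simp]: "1 \<in> polyring l d"
  using P_const[of 1] by (simp add: const_def)

lemma P_of_nat [simp]: "of_nat n \<in> polyring l d"
  using P_const[of "of_nat n"] by (simp add: const_def)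

lemma P_var: "(pp, j) \<in> idx l d \<Longrightarrow> var pp j \<in> polyring l d"
  unfolding var_def by (rule P_single) simp

lemma P_power: "f \<in> polyring l d \<Longrightarrow> f ^ n \<in> polyring l d"
  by (induction n) (simp_all add: P_mult)

lemma P_sum: "(\<And>x. x \<in> A \<Longrightarrow> F x \<in> polyring l d) \<Longrightarrow> sum F A \<in> polyring l d"
  by (induction A rule: infinite_finite_induct) (auto simp: P_add)

lemma P_pd: "f \<in> polyring l d \<Longrightarrow> pd v f \<in> polyring l d"
  unfolding pd_def
proof (rule P_sum, rule P_single)
  fix m assume f: "f \<in> polyring l d" and m: "m \<in> Poly_Mapping.keys f"
  have "Poly_Mapping.keys (m - Poly_Mapping.single v 1) \<subseteq> Poly_Mapping.keys m"
    by (auto simp: in_keys_iff lookup_minus)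
  then show "Poly_Mapping.keys (m - Poly_Mapping.single v 1) \<subseteq> idx l d"
    using f m unfolding P_iff by blast
qed

definition Dv :: "(nat \<times> nat \<Rightarrow> 'k::comm_ring_1 mpoly) \<Rightarrow> (nat \<times> nat) set \<Rightarrow> 'k mpoly \<Rightarrow> 'k mpoly" where
  "Dv ps I f = (\<Sum>v\<in>I. ps v * pd v f)"

lemma Dv_add: "Dv ps I (f + g) = Dv ps I f + Dv ps I g"
  by (simp add: Dv_def pd_add distrib_left sum.distrib)

lemma Dv_mult: "Dv ps I (f * g) = f * Dv ps I g + g * Dv ps I f"
  by (simp add: Dv_def pd_mult distrib_left sum.distrib sum_distrib_left algebra_simps)

lemma pd_const [simp]: "pd v (const c) = 0"
  by (simp add: const_def pd_single)

lemma Dv_const [simp]: "Dv ps I (const c) = 0"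
  by (simp add: Dv_def)

lemma pd_var: "pd v (var pp j) = (if v = (pp, j) then 1 else 0)"
  by (auto simp: var_def pd_single lookup_single)

lemma Dv_var: "finite I \<Longrightarrow> (pp, j) \<in> I \<Longrightarrow> Dv ps I (var pp j) = ps (pp, j)"
  by (simp add: Dv_def pd_var if_distrib sum.delta' cong: if_cong)

lemma Dv_power: "Dv ps I (f ^ Suc n) = of_nat (Suc n) * f ^ n * Dv ps I f"
  by (induction n) (simp_all add: Dv_mult algebra_simps)

lemma Dv_deriv:
  assumes "\<And>v. v \<in> idx l d \<Longrightarrow> ps v \<in> polyring l d"
  shows "is_k_derivation l d (Dv ps (idx l d))"
  unfolding is_k_derivation_def
  using assms by (auto simp: Dv_add Dv_mult) (auto simp: Dv_def intro!: P_sum P_mult P_pd)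


lemma const_mult: "const a * const b = (const (a * b) :: 'k::comm_ring_1 mpoly)"
  by (simp add: const_def mult_single)

lemma const_one: "const 1 = (1 :: 'k::comm_ring_1 mpoly)"
  by (simp add: const_def)

lemma const_of_nat: "const (of_nat n) = (of_nat n :: 'k::comm_ring_1 mpoly)"
  by (simp add: const_def)

theorem mainTheorem10:
  fixes p l :: nat and d :: "nat \<Rightarrow> nat" and sigma i :: nat
  assumes "prime p" and "CHAR('k::alg_closed_field) = p"
    and "\<forall>lam. 1 \<le> lam \<and> lam \<le> l \<longrightarrow> d lam \<le> p - 1"
    and "1 \<le> sigma" and "sigma \<le> l" and "1 \<le> i" and "i \<le> d sigma"
  shows "\<exists>psi :: 'k mpoly \<Rightarrow> 'k mpoly.
           is_k_derivation l d psi \<and>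
           (\<forall>(pp, j) \<in> idx l d.
              var sigma i * psi (chart_pullback sigma i pp j) = pullback_of_partial d sigma i pp j) \<and>
           (\<exists>a :: nat \<times> nat \<Rightarrow> 'k mpoly. (\<forall>q \<in> idx l d. a q \<in> polyring l d) \<and>
              (\<Sum>(pp, j) \<in> idx l d. a (pp, j) * psi (var pp j)) = 1)"
proof -
  have p2: "p \<ge> 2" using assms(1) by (simp add: prime_ge_2_nat)
  have ip: "i < p" using assms(3) assms(4,5,7) p2 by fastforce
  have inz: "(of_nat i :: 'k) \<noteq> 0"
  proof
    assume "(of_nat i :: 'k) = 0"
    then have "p dvd i" using assms(2) by (simp add: of_nat_eq_0_iff_char_dvd)
    then show False using ip assms(6) by (auto dest: dvd_imp_le)
  qed
  define t :: "'k mpoly" where "t = var sigma i"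
  define w :: "'k mpoly" where "w = (if i < d sigma then var sigma (Suc i) else 0)"
  define c :: "'k mpoly" where "c = const (inverse (of_nat i))"
  have ic: "of_nat i * c = 1"
    unfolding c_def by (simp add: const_mult const_one inz flip: const_of_nat)
  define tgt :: "nat \<Rightarrow> nat \<Rightarrow> 'k mpoly" where
    "tgt pp j = (if j < d pp then (if (pp, Suc j) = (sigma, i) then 1 else var pp (Suc j)) else 0)" for pp j
  define ps :: "nat \<times> nat \<Rightarrow> 'k mpoly" where
    "ps q = (if q = (sigma, i) then c * t * w
             else tgt (fst q) (snd q) - of_nat (snd q) * c * var (fst q) (snd q) * w)" for q
  define psi :: "'k mpoly \<Rightarrow> 'k mpoly" where "psi = Dv ps (idx l d)"
  have si: "(sigma, i) \<in> idx l d" using assms by (simp add: idx_def)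
  have tP: "t \<in> polyring l d" using si by (simp add: t_def P_var)
  have wP: "w \<in> polyring l d" using assms by (auto simp: w_def idx_def intro!: P_var)
  have cP: "c \<in> polyring l d" by (simp add: c_def)
  have psP: "ps q \<in> polyring l d" if q: "q \<in> idx l d" for q
  proof -
    obtain pp j where qq: "q = (pp, j)" by fastforce
    have "tgt pp j \<in> polyring l d" using q qq by (auto simp: tgt_def idx_def intro!: P_var)
    moreover have "var pp j \<in> polyring l d" using q qq by (simp add: P_var)
    ultimately show ?thesis using tP wP cP qq by (auto simp: ps_def intro!: P_mult P_diff)
  qed
  have der: "is_k_derivation l d psi" unfolding psi_def by (rule Dv_deriv) (rule psP)
  have psi_var: "psi (var pp j) = ps (pp, j)" if "(pp, j) \<in> idx l d" for pp j
    unfolding psi_def using that idx_finite by (simp add: Dv_var)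
  have psi_t: "psi t = c * t * w" using psi_var[OF si] by (simp add: t_def ps_def)
  have psi_tpow: "psi (t ^ Suc n) = of_nat (Suc n) * t ^ n * (c * t * w)" for n
    unfolding psi_def using psi_t by (simp only: Dv_power psi_def)
  have eqs: "var sigma i * psi (chart_pullback sigma i pp j) = pullback_of_partial d sigma i pp j"
    if q: "(pp, j) \<in> idx l d" for pp j
  proof -
    consider "j = 0" | "(pp, j) = (sigma, i)" | "j \<noteq> 0" "(pp, j) \<noteq> (sigma, i)" by blast
    then show ?thesis
    proof cases
      case 1
      then have "(pp, j) \<noteq> (sigma, i)" using assms(6) by auto
      then show ?thesis using 1 psi_var[OF q]
        by (auto simp: chart_pullback_def pullback_of_partial_def ps_def tgt_def t_def)
    next
      case 2
      obtain i' where i': "i = Suc i'" using assms(6) by (cases i) auto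
      have "var sigma i * psi (chart_pullback sigma i pp j) = t * psi (t ^ Suc i')"
        using 2 i' by (simp add: chart_pullback_def t_def)
      also have "\<dots> = t ^ Suc i * w * (of_nat i * c)"
        unfolding psi_tpow i' by (simp add: algebra_simps)
      also have "\<dots> = t ^ Suc i * w" by (simp add: ic)
      moreover have "pullback_of_partial d sigma i pp j = t ^ Suc i * w"
        using 2 assms(6) by (simp add: pullback_of_partial_def chart_pullback_def w_def t_def)
      ultimately show ?thesis by simp
    next
      case 3
      obtain j' where j': "j = Suc j'" using 3 by (cases j) auto
      have "var sigma i * psi (chart_pullback sigma i pp j) = t * psi (t ^ Suc j' * var pp j)"
        using 3 j' by (auto simp: chart_pullback_def t_def)
      also have "\<dots> = t * (t ^ Suc j' * ps (pp, j) + var pp j * (of_nat (Suc j') * t ^ j' * (c * t * w)))"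
        unfolding psi_def Dv_mult psi_tpow[unfolded psi_def] psi_var[OF q, unfolded psi_def] by (rule refl)
      also have "\<dots> = t ^ Suc j * tgt pp j"
        using 3 j' by (simp add: ps_def algebra_simps del: prod.inject)
      also have "\<dots> = pullback_of_partial d sigma i pp j"
        using 3 j' by (auto simp: tgt_def pullback_of_partial_def chart_pullback_def t_def)
      finally show ?thesis .
    qed
  qed
  define U :: "nat \<Rightarrow> 'k mpoly" where "U j = (if j = i then 1 else var sigma j)" for j
  define a :: "nat \<times> nat \<Rightarrow> 'k mpoly" where
    "a q = (if fst q = sigma \<and> snd q < i
            then const (\<Prod>m\<in>{Suc (snd q)..<i}. of_nat m / of_nat i) * w ^ (i - 1 - snd q) else 0)" for q
  define F :: "nat \<Rightarrow> 'k mpoly" where "F n = (if n = 0 then 0 else a (sigma, n - 1) * U n)" for n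
  have aP: "a q \<in> polyring l d" for q
    using wP by (auto simp: a_def intro!: P_mult P_power)
  have step: "a (sigma, j) * psi (var sigma j) = F (Suc j) - F j" if j: "j < i" for j
  proof -
    have jq: "(sigma, j) \<in> idx l d" using j assms by (simp add: idx_def)
    have pv: "psi (var sigma j) = U (Suc j) - of_nat j * c * U j * w"
      using psi_var[OF jq] j assms(7) by (simp add: ps_def tgt_def U_def)
    show ?thesis
    proof (cases j)
      case 0
      show ?thesis unfolding pv using 0 by (simp add: F_def)
    next
      case (Suc j'')
      have pr: "(\<Prod>m\<in>{j..<i}. of_nat m / of_nat i :: 'k)
          = (of_nat j / of_nat i) * (\<Prod>m\<in>{Suc j..<i}. of_nat m / of_nat i)"
        using j by (rule prod.atLeast_Suc_lessThan)
      have ex: "i - 1 - j'' = Suc (i - 1 - j)" using j Suc by simp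
      have cj: "const (of_nat j / of_nat i :: 'k) = of_nat j * c"
        by (simp add: c_def divide_inverse const_of_nat flip: const_mult)
      have jj: "j'' < i" "Suc j'' = j" using j Suc by auto
      have "a (sigma, j'') = const (\<Prod>m\<in>{j..<i}. of_nat m / of_nat i) * w ^ Suc (i - 1 - j)"
        unfolding a_def fst_conv snd_conv ex jj if_True using jj(1) by simp
      also have "\<dots> = const (of_nat j / of_nat i) * const (\<Prod>m\<in>{Suc j..<i}. of_nat m / of_nat i) * w ^ Suc (i - 1 - j)"
        unfolding pr const_mult by simp
      also have "\<dots> = a (sigma, j) * of_nat j * c * w"
        unfolding cj a_def fst_conv snd_conv using j by (simp add: algebra_simps)
      finally have "a (sigma, j'') = a (sigma, j) * of_nat j * c * w" .
      then show ?thesis unfolding pv using Suc by (simp add: F_def algebra_simps)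
    qed
  qed
  have "(\<Sum>(pp, j) \<in> idx l d. a (pp, j) * psi (var pp j))
      = (\<Sum>q \<in> idx l d. a q * psi (var (fst q) (snd q)))"
    by (simp add: split_def)
  also have "\<dots> = (\<Sum>q \<in> Pair sigma ` {..<i}. a q * psi (var (fst q) (snd q)))"
    using idx_finite assms by (intro sum.mono_neutral_right) (auto simp: idx_def a_def)
  also have "\<dots> = (\<Sum>j<i. a (sigma, j) * psi (var sigma j))"
    by (subst sum.reindex) (auto simp: inj_on_def)
  also have "\<dots> = (\<Sum>j<i. F (Suc j) - F j)"
    by (rule sum.cong) (simp_all add: step)
  also have "\<dots> = 1"
    unfolding sum_lessThan_telescope using assms(6) by (simp add: F_def a_def U_def const_one)
  finally have unit: "(\<Sum>(pp, j) \<in> idx l d. a (pp, j) * psi (var pp j)) = 1" .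
  show ?thesis
    using der eqs aP unit by blast
qed

end
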